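(* In $\mathbb{Z}[q,q^{-1}][[x,y]]$, \[ A(q,x,y)=\sum_{i=1}^{\infty}q^i[i]!\,x^iy^i\prod_{j=0}^{i}\frac{1}{q^j-q^j[j+1]x+[j]xy}. \]
   Context: $[m]=1+q+\dots+q^{m-1}$ ($[0]=0$), $[i]!=\prod_{m=1}^i[m]$. For $0\le k\le n$, a $\hbox{Le}$-diagram in a $k\times(n-k)$ rectangle is a pair $(\lambda,D)$ with $\lambda=(\lambda_1\ge\dots\ge\lambda_k\ge0)$, $\lambda_1\le n-k$, and $D$ a filling of the Young diagram of $\lambda$ (row $i$ has $\lambda_i$ left-justified boxes, row 1 on top) by $0$'s and $1$'s such that no $0$ has a $1$ above it in its column and a $1$ to its left in its row; its rank is its number of $1$'s. $A_{k,n}(q)=\sum q^{\mathrm{rank}}$ over such diagrams (the generating function of cells of the totally nonnegative Grassmannian $Gr^+_{k,n}$ by dimension), $A_{k,n}(q)=0$ for $n<k$, and $A(q,x,y)=\sum_{k\ge1}\sum_{n\ge0}A_{k,n}(q)x^ny^k$. Each factor $1/(q^j-q^j[j+1]x+[j]xy)$ is its inverse in $\mathbb{Z}[q,q^{-1}][[x,y]]$ (equivalently the expansion of $\frac{1}{q^j(1-[j+1]x)\left(1-\frac{q^{-j}[j]y}{1-[j+1]x}\right)}$). *)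

theory Defs
  imports "HOL-Computational_Algebra.Formal_Power_Series"
          "HOL-Computational_Algebra.Formal_Laurent_Series"
begin

text \<open>A Le-diagram in a k x (n-k) rectangle: a partition lam (rows 0..k-1, row 0 on top,
  lam i = 0 for i >= k), weakly decreasing, lam 0 <= n - k, together with a 0/1 filling D
  of the Young diagram (D i j = True means a 1 in row i, column j; D is False outside the
  diagram) satisfying the Le-condition.\<close>

definition in_shape :: "(nat \<Rightarrow> nat) \<Rightarrow> nat \<Rightarrow> nat \<Rightarrow> bool" where
  "in_shape lam i j \<longleftrightarrow> j < lam i"

definition le_diagrams :: "nat \<Rightarrow> nat \<Rightarrow> ((nat \<Rightarrow> nat) \<times> (nat \<Rightarrow> nat \<Rightarrow> bool)) set" where
  "le_diagrams k n = {(lam, D).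
      (\<forall>i. k \<le> i \<longrightarrow> lam i = 0) \<and>
      (\<forall>i. lam (Suc i) \<le> lam i) \<and>
      lam 0 \<le> n - k \<and>
      (\<forall>i j. D i j \<longrightarrow> in_shape lam i j) \<and>
      (\<forall>i j. in_shape lam i j \<and> \<not> D i j \<longrightarrow>
          \<not> ((\<exists>i'<i. D i' j) \<and> (\<exists>j'<j. D i j')))}"

definition le_rank :: "(nat \<Rightarrow> nat) \<times> (nat \<Rightarrow> nat \<Rightarrow> bool) \<Rightarrow> nat" where
  "le_rank d = card {(i, j). snd d i j}"

text \<open>Coefficients are taken in rat fls (Laurent series in q over Q), which contains
  Z[q,q^-1] as a subring.\<close>

abbreviation qvar :: "rat fls" where "qvar \<equiv> fls_X"

definition A_kn :: "nat \<Rightarrow> nat \<Rightarrow> rat fls" where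
  "A_kn k n = (if n < k then 0 else (\<Sum>d\<in>le_diagrams k n. qvar ^ le_rank d))"

definition qint :: "nat \<Rightarrow> rat fls" where
  "qint m = (\<Sum>i<m. qvar ^ i)"

definition qfact :: "nat \<Rightarrow> rat fls" where
  "qfact i = (\<Prod>m\<in>{1..i}. qint m)"

type_synonym ser = "rat fls fps fps"

definition cst :: "rat fls \<Rightarrow> ser" where
  "cst c = fps_const (fps_const c)"

definition xvar :: ser where "xvar = fps_const fps_X"

definition yvar :: ser where "yvar = fps_X"

definition A_gf :: ser where
  "A_gf = Abs_fps (\<lambda>k. if k = 0 then 0 else Abs_fps (\<lambda>n. A_kn k n))"

definition factor :: "nat \<Rightarrow> ser" where
  "factor j = cst (qvar ^ j) - cst (qvar ^ j * qint (j + 1)) * xvar + cst (qint j) * xvar * yvar"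

definition term_i :: "nat \<Rightarrow> ser" where
  "term_i i = cst (qvar ^ i * qfact i) * xvar ^ i * yvar ^ i *
              (\<Prod>j\<in>{0..i}. inverse (factor j))"

end

theory Submission
  imports Defs
begin


type_synonym dg = "(nat \<Rightarrow> nat) \<times> (nat \<Rightarrow> nat \<Rightarrow> bool)"

lemma mem_le:
  "(lam, D) \<in> le_diagrams k n \<longleftrightarrow> (\<forall>i. k \<le> i \<longrightarrow> lam i = 0) \<and> (\<forall>i. lam (Suc i) \<le> lam i)
    \<and> lam 0 \<le> n - k \<and> (\<forall>i j. D i j \<longrightarrow> j < lam i)
    \<and> (\<forall>i j. j < lam i \<and> \<not> D i j \<longrightarrow> \<not> ((\<exists>i'<i. D i' j) \<and> (\<exists>j'<j. D i j')))"
  by (simp add: le_diagrams_def in_shape_def)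

definition Lset :: "nat \<Rightarrow> nat \<Rightarrow> dg set" where "Lset k m = le_diagrams k (k + m)"

lemma mem_L:
  "(lam, D) \<in> Lset k m \<longleftrightarrow> (\<forall>i. k \<le> i \<longrightarrow> lam i = 0) \<and> (\<forall>i. lam (Suc i) \<le> lam i)
    \<and> lam 0 \<le> m \<and> (\<forall>i j. D i j \<longrightarrow> j < lam i)
    \<and> (\<forall>i j. j < lam i \<and> \<not> D i j \<longrightarrow> \<not> ((\<exists>i'<i. D i' j) \<and> (\<exists>j'<j. D i j')))"
  by (simp add: Lset_def mem_le)

definition colfree :: "dg \<Rightarrow> nat \<Rightarrow> bool" where
  "colfree d j \<longleftrightarrow> \<not> (\<exists>i j'. j' < j \<and> snd d i j' \<and> j < fst d i \<and> \<not> snd d i j)"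

definition Ufree :: "nat \<Rightarrow> dg \<Rightarrow> nat set" where
  "Ufree m d = {j. j < m \<and> colfree d j}"

definition unr :: "nat \<Rightarrow> dg \<Rightarrow> nat" where "unr m d = card (Ufree m d)"

definition addrow :: "nat \<Rightarrow> dg \<Rightarrow> nat set \<Rightarrow> dg" where
  "addrow m d S = ((\<lambda>i. case i of 0 \<Rightarrow> m | Suc i \<Rightarrow> fst d i),
                   (\<lambda>i j. case i of 0 \<Rightarrow> j \<in> S | Suc i \<Rightarrow> snd d i j))"

definition droprow :: "dg \<Rightarrow> dg" where
  "droprow d = ((\<lambda>i. fst d (Suc i)), (\<lambda>i j. snd d (Suc i) j))"

definition Top :: "nat \<Rightarrow> nat \<Rightarrow> dg set" where
  "Top k m = {d \<in> Lset k m. fst d 0 = m}"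

lemma L0: "Lset 0 m = {(\<lambda>_. 0, \<lambda>_ _. False)}"
proof (rule set_eqI)
  fix x :: dg
  obtain lam D where x: "x = (lam, D)" by fastforce
  show "x \<in> Lset 0 m \<longleftrightarrow> x \<in> {(\<lambda>_. 0, \<lambda>_ _. False)}"
  proof
    assume "x \<in> Lset 0 m"
    then have xL: "(lam, D) \<in> Lset 0 m" by (simp add: x)
    have a: "\<forall>i. lam i = 0" using xL unfolding mem_L by simp
    have a2: "\<forall>i j. D i j \<longrightarrow> j < lam i" using xL unfolding mem_L by blast
    have "lam = (\<lambda>_. 0)" using a by (simp add: fun_eq_iff)
    moreover have "D = (\<lambda>_ _. False)" using a a2 by (simp add: fun_eq_iff)
    ultimately show "x \<in> {(\<lambda>_. 0, \<lambda>_ _. False)}" by (simp add: x)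
  next
    assume "x \<in> {(\<lambda>_. 0, \<lambda>_ _. False)}"
    then show "x \<in> Lset 0 m" by (simp add: mem_L)
  qed
qed

lemma L_Suc: "Lset k (Suc m) = Lset k m \<union> Top k (Suc m)"
  by (auto simp: Top_def mem_L split_paired_all)

lemma L_Suc_disj: "Lset k m \<inter> Top k (Suc m) = {}"
  by (auto simp: Top_def mem_L split_paired_all)

lemma L_zero: "Lset k 0 = Top k 0"
  by (auto simp: Top_def mem_L split_paired_all)

lemma Ufree_Suc: "d \<in> Lset k m \<Longrightarrow> Ufree (Suc m) d = insert m (Ufree m d)"
proof -
  assume d: "d \<in> Lset k m"
  obtain lam D where dd: "d = (lam, D)" by fastforce
  have "lam i \<le> m" for i
  proof -
    have dec: "\<forall>i. lam (Suc i) \<le> lam i" "lam 0 \<le> m" using d dd by (auto simp: mem_L)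
    have "lam i \<le> lam 0"
    proof (induction i)
      case (Suc i) then show ?case using dec(1)[rule_format, of i] by linarith
    qed simp
    then show ?thesis using dec by simp
  qed
  then have "colfree d m" by (auto simp: colfree_def dd not_less)
  then show ?thesis by (auto simp: Ufree_def)
qed

lemma addrow_mem:
  assumes d: "d \<in> Lset k m" and S: "S \<subseteq> Ufree m d"
  shows "addrow m d S \<in> Top (Suc k) m"
proof -
  obtain lam D where dd: "d = (lam, D)" by fastforce
  have h: "(\<forall>i. k \<le> i \<longrightarrow> lam i = 0)" "(\<forall>i. lam (Suc i) \<le> lam i)"
    "lam 0 \<le> m" "(\<forall>i j. D i j \<longrightarrow> j < lam i)"
    "(\<forall>i j. j < lam i \<and> \<not> D i j \<longrightarrow> \<not> ((\<exists>i'<i. D i' j) \<and> (\<exists>j'<j. D i j')))"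
    using d by (auto simp: dd mem_L)
  have Sj: "\<And>j. j \<in> S \<Longrightarrow> j < m \<and> colfree d j" using S by (auto simp: Ufree_def)
  let ?lam = "\<lambda>i. case i of 0 \<Rightarrow> m | Suc i \<Rightarrow> lam i"
  let ?D = "\<lambda>i j. case i of 0 \<Rightarrow> j \<in> S | Suc i \<Rightarrow> D i j"
  have 1: "\<forall>i. Suc k \<le> i \<longrightarrow> ?lam i = 0" using h(1) by (auto split: nat.split)
  have 2: "\<forall>i. ?lam (Suc i) \<le> ?lam i" using h(2,3) by (auto split: nat.split)
  have 3: "\<forall>i j. ?D i j \<longrightarrow> j < ?lam i" using h(4) Sj by (auto split: nat.split)
  have 4: "\<forall>i j. j < ?lam i \<and> \<not> ?D i j \<longrightarrow> \<not> ((\<exists>i'<i. ?D i' j) \<and> (\<exists>j'<j. ?D i j'))"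
  proof (intro allI impI)
    fix i j assume a: "j < ?lam i \<and> \<not> ?D i j"
    show "\<not> ((\<exists>i'<i. ?D i' j) \<and> (\<exists>j'<j. ?D i j'))"
    proof (cases i)
      case 0 then show ?thesis by auto
    next
      case (Suc i0)
      show ?thesis
      proof
        assume b: "(\<exists>i'<i. ?D i' j) \<and> (\<exists>j'<j. ?D i j')"
        then obtain j' where j': "j' < j" "D i0 j'" using Suc by auto
        from b obtain i' where i': "i' < i" "?D i' j" by auto
        have a': "j < lam i0" "\<not> D i0 j" using a Suc by auto
        show False
        proof (cases i')
          case 0
          then have "j \<in> S" using i' by auto
          then have "colfree d j" using Sj by auto
          then show False using j' a' by (auto simp: colfree_def dd)
        next
          case (Suc i1)
          then have "i1 < i0" "D i1 j" using i' \<open>i = Suc i0\<close> by auto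
          then show False using h(5) a' j' by blast
        qed
      qed
    qed
  qed
  have "(?lam, ?D) \<in> Lset (Suc k) m" using 1 2 3 4 by (simp only: mem_L) simp
  moreover have "addrow m d S = (?lam, ?D)" by (auto simp: addrow_def dd fun_eq_iff split: nat.split)
  ultimately show ?thesis by (simp add: Top_def)
qed

lemma droprow_mem:
  assumes d: "d \<in> Top (Suc k) m"
  shows "droprow d \<in> Lset k m" "{j. snd d 0 j} \<subseteq> Ufree m (droprow d)"
    "addrow m (droprow d) {j. snd d 0 j} = d"
proof -
  obtain lam D where dd: "d = (lam, D)" by fastforce
  have h: "(\<forall>i. Suc k \<le> i \<longrightarrow> lam i = 0)" "(\<forall>i. lam (Suc i) \<le> lam i)"
    "lam 0 = m" "(\<forall>i j. D i j \<longrightarrow> j < lam i)"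
    "(\<forall>i j. j < lam i \<and> \<not> D i j \<longrightarrow> \<not> ((\<exists>i'<i. D i' j) \<and> (\<exists>j'<j. D i j')))"
    using d by (auto simp: dd mem_L Top_def)
  have "((\<lambda>i. lam (Suc i)), (\<lambda>i j. D (Suc i) j)) \<in> Lset k m"
    unfolding mem_L
  proof (intro conjI allI impI)
    show "lam (Suc 0) \<le> m" using h(2,3) by metis
  next
    fix i j assume "j < lam (Suc i) \<and> \<not> D (Suc i) j"
    then show "\<not> ((\<exists>i'<i. D (Suc i') j) \<and> (\<exists>j'<j. D (Suc i) j'))"
      using h(5)[rule_format, of j "Suc i"] by auto
  next
    fix i assume "k \<le> i" then show "lam (Suc i) = 0" using h(1) by simp
  next
    fix i show "lam (Suc (Suc i)) \<le> lam (Suc i)" using h(2) by blast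
  next
    fix i j assume "D (Suc i) j" then show "j < lam (Suc i)" using h(4) by blast
  qed
  then show "droprow d \<in> Lset k m" by (simp add: droprow_def dd)
  show "{j. snd d 0 j} \<subseteq> Ufree m (droprow d)"
  proof
    fix j assume "j \<in> {j. snd d 0 j}"
    then have j: "D 0 j" by (simp add: dd)
    then have "j < m" using h(3,4) by auto
    moreover have "colfree (droprow d) j"
    proof (unfold colfree_def, rule notI)
      assume "\<exists>i j'. j' < j \<and> snd (droprow d) i j' \<and> j < fst (droprow d) i \<and> \<not> snd (droprow d) i j"
      then obtain i j' where "j' < j" "D (Suc i) j'" "j < lam (Suc i)" "\<not> D (Suc i) j"
        by (auto simp: droprow_def dd)
      then show False using h(5)[rule_format, of j "Suc i"] j by blast
    qed
    ultimately show "j \<in> Ufree m (droprow d)" by (simp add: Ufree_def)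
  qed
  show "addrow m (droprow d) {j. snd d 0 j} = d"
    using h(3) by (auto simp: addrow_def droprow_def dd fun_eq_iff split: nat.split)
qed

lemma droprow_addrow: "droprow (addrow m d S) = d" "{j. snd (addrow m d S) 0 j} = S"
  by (simp_all add: droprow_def addrow_def)

lemma Top_image: "Top (Suc k) m = (\<lambda>(d, S). addrow m d S) ` (SIGMA d:Lset k m. Pow (Ufree m d))"
proof
  show "Top (Suc k) m \<subseteq> (\<lambda>(d, S). addrow m d S) ` (SIGMA d:Lset k m. Pow (Ufree m d))"
  proof
    fix d assume "d \<in> Top (Suc k) m"
    from droprow_mem[OF this] show "d \<in> (\<lambda>(d, S). addrow m d S) ` (SIGMA d:Lset k m. Pow (Ufree m d))"
      by (intro image_eqI[of _ _ "(droprow d, {j. snd d 0 j})"]) auto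
  qed
next
  show "(\<lambda>(d, S). addrow m d S) ` (SIGMA d:Lset k m. Pow (Ufree m d)) \<subseteq> Top (Suc k) m"
  proof
    fix x assume "x \<in> (\<lambda>(d, S). addrow m d S) ` (SIGMA d:Lset k m. Pow (Ufree m d))"
    then obtain p where p: "p \<in> (SIGMA d:Lset k m. Pow (Ufree m d))" "x = (\<lambda>(d, S). addrow m d S) p"
      by (rule imageE)
    obtain d S where "p = (d, S)" by fastforce
    with p show "x \<in> Top (Suc k) m" by (simp add: addrow_mem)
  qed
qed

lemma Top_inj: "inj_on (\<lambda>(d, S). addrow m d S) X"
proof (rule inj_onI)
  fix a b assume "a \<in> X" "b \<in> X" "(\<lambda>(d, S). addrow m d S) a = (\<lambda>(d, S). addrow m d S) b"
  then have "addrow m (fst a) (snd a) = addrow m (fst b) (snd b)" by (simp add: case_prod_beta)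
  then have "droprow (addrow m (fst a) (snd a)) = droprow (addrow m (fst b) (snd b))"
    "{j. snd (addrow m (fst a) (snd a)) 0 j} = {j. snd (addrow m (fst b) (snd b)) 0 j}" by simp_all
  then show "a = b" unfolding droprow_addrow by (simp add: prod_eq_iff)
qed

lemma L_finite: "finite (Lset k m)"
proof (induction k arbitrary: m)
  case 0 then show ?case by (simp add: L0)
next
  case (Suc k)
  have fin_top: "finite (Top (Suc k) m')" for m'
  proof -
    have "finite (SIGMA d:Lset k m'. Pow (Ufree m' d))"
      using Suc by (intro finite_SigmaI) (auto simp: Ufree_def)
    then show ?thesis unfolding Top_image by (rule finite_imageI)
  qed
  show ?case
  proof (induction m)
    case 0 then show ?case using fin_top by (simp add: L_zero)
  next
    case (Suc m) then show ?case using fin_top by (simp add: L_Suc)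
  qed
qed



lemma lam_le: assumes "(lam, D) \<in> Lset k m" shows "lam i \<le> m"
proof -
  have dec: "\<forall>i. lam (Suc i) \<le> lam i" "lam 0 \<le> m" using assms unfolding mem_L by blast+
  have "lam i \<le> lam 0"
  proof (induction i)
    case (Suc i) then show ?case using dec(1)[rule_format, of i] by linarith
  qed simp
  then show ?thesis using dec by simp
qed

lemma rank_set_sub: assumes "d \<in> Lset k m" shows "{(i, j). snd d i j} \<subseteq> {..<k} \<times> {..<m}"
proof
  obtain lam D where dd: "d = (lam, D)" by fastforce
  have dL: "(lam, D) \<in> Lset k m" using assms dd by simp
  have h: "\<forall>i. k \<le> i \<longrightarrow> lam i = 0" "\<forall>i j. D i j \<longrightarrow> j < lam i"
    using dL unfolding mem_L by blast+
  fix x assume "x \<in> {(i, j). snd d i j}"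
  then obtain i j where x: "x = (i, j)" "D i j" by (auto simp: dd)
  then have jl: "j < lam i" using h by blast
  have "lam i \<le> m" using dL by (rule lam_le)
  then have "j < m" using jl by linarith
  moreover have "i < k"
  proof (rule ccontr)
    assume "\<not> i < k" then have "lam i = 0" using h(1) by simp
    then show False using jl by simp
  qed
  ultimately show "x \<in> {..<k} \<times> {..<m}" by (simp add: x)
qed

lemma rank_finite: assumes "d \<in> Lset k m" shows "finite {(i, j). snd d i j}"
proof -
  have "finite ({..<k} \<times> {..<m})" by simp
  then show ?thesis by (rule finite_subset[OF rank_set_sub[OF assms]])
qed

lemma rank_addrow:
  assumes "d \<in> Lset k m" and fS: "finite S"
  shows "le_rank (addrow m d S) = le_rank d + card S"
proof -
  let ?A = "(\<lambda>j. (0::nat, j)) ` S"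
  let ?B = "(\<lambda>p. (Suc (fst p), snd p)) ` {(i, j). snd d i j}"
  have eq: "{(i, j). snd (addrow m d S) i j} = ?A \<union> ?B"
  proof (rule set_eqI)
    fix x :: "nat \<times> nat"
    obtain i j where x: "x = (i, j)" by fastforce
    show "x \<in> {(i, j). snd (addrow m d S) i j} \<longleftrightarrow> x \<in> ?A \<union> ?B"
    proof (cases i)
      case 0
      have "x \<in> ?A \<longleftrightarrow> j \<in> S" unfolding x 0 by blast
      moreover have "x \<notin> ?B" unfolding x 0 by blast
      moreover have "x \<in> {(i, j). snd (addrow m d S) i j} \<longleftrightarrow> j \<in> S"
        unfolding x 0 by (simp add: addrow_def)
      ultimately show ?thesis by blast
    next
      case (Suc i')
      have "x \<in> ?B \<longleftrightarrow> snd d i' j"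
      proof
        assume "x \<in> ?B"
        then obtain p where "p \<in> {(i, j). snd d i j}" "x = (Suc (fst p), snd p)" by blast
        then show "snd d i' j" using x Suc by (cases p) simp
      next
        assume "snd d i' j"
        then show "x \<in> ?B" using x Suc
          by (intro image_eqI[of _ _ "(i', j)"]) simp_all
      qed
      moreover have "x \<notin> ?A" unfolding x Suc by blast
      moreover have "x \<in> {(i, j). snd (addrow m d S) i j} \<longleftrightarrow> snd d i' j"
        unfolding x Suc by (simp add: addrow_def)
      ultimately show ?thesis by blast
    qed
  qed
  have fin: "finite {(i, j). snd d i j}" by (rule rank_finite[OF assms(1)])
  have disj: "?A \<inter> ?B = {}" by blast
  have c1: "card (?A \<union> ?B) = card ?A + card ?B"
    using fS fin disj by (intro card_Un_disjoint) simp_all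
  have c2: "card ?A = card S" by (rule card_image) (simp add: inj_on_def)
  have c3: "card ?B = card {(i, j). snd d i j}"
    by (rule card_image) (simp add: inj_on_def prod_eq_iff)
  show ?thesis unfolding le_rank_def eq c1 c2 c3 by simp
qed

lemma colfree_addrow:
  assumes "j < m"
  shows "colfree (addrow m d S) j \<longleftrightarrow> colfree d j \<and> (j \<in> S \<or> (\<forall>s\<in>S. j < s))"
proof -
  have "colfree (addrow m d S) j \<longleftrightarrow>
     \<not> (\<exists>j'. j' < j \<and> j' \<in> S \<and> j < m \<and> j \<notin> S) \<and>
     \<not> (\<exists>i j'. j' < j \<and> snd d i j' \<and> j < fst d i \<and> \<not> snd d i j)"
    unfolding colfree_def
  proof (intro iffI conjI)
    assume a: "\<not> (\<exists>i j'. j' < j \<and> snd (addrow m d S) i j' \<and> j < fst (addrow m d S) i \<and> \<not> snd (addrow m d S) i j)"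
    show "\<not> (\<exists>j'. j' < j \<and> j' \<in> S \<and> j < m \<and> j \<notin> S)"
    proof
      assume "\<exists>j'. j' < j \<and> j' \<in> S \<and> j < m \<and> j \<notin> S"
      then obtain j' where "j' < j \<and> j' \<in> S \<and> j < m \<and> j \<notin> S" by blast
      moreover have "\<not> (j' < j \<and> snd (addrow m d S) 0 j' \<and> j < fst (addrow m d S) 0 \<and> \<not> snd (addrow m d S) 0 j)"
        using a by blast
      ultimately show False by (simp add: addrow_def)
    qed
    show "\<not> (\<exists>i j'. j' < j \<and> snd d i j' \<and> j < fst d i \<and> \<not> snd d i j)"
    proof
      assume "\<exists>i j'. j' < j \<and> snd d i j' \<and> j < fst d i \<and> \<not> snd d i j"
      then obtain i j' where "j' < j \<and> snd d i j' \<and> j < fst d i \<and> \<not> snd d i j" by blast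
      moreover have "\<not> (j' < j \<and> snd (addrow m d S) (Suc i) j' \<and> j < fst (addrow m d S) (Suc i) \<and> \<not> snd (addrow m d S) (Suc i) j)"
        using a by blast
      ultimately show False by (simp add: addrow_def)
    qed
  next
    assume a: "\<not> (\<exists>j'. j' < j \<and> j' \<in> S \<and> j < m \<and> j \<notin> S) \<and>
     \<not> (\<exists>i j'. j' < j \<and> snd d i j' \<and> j < fst d i \<and> \<not> snd d i j)"
    show "\<not> (\<exists>i j'. j' < j \<and> snd (addrow m d S) i j' \<and> j < fst (addrow m d S) i \<and> \<not> snd (addrow m d S) i j)"
    proof
      assume "\<exists>i j'. j' < j \<and> snd (addrow m d S) i j' \<and> j < fst (addrow m d S) i \<and> \<not> snd (addrow m d S) i j"
      then obtain i j' where b: "j' < j" "snd (addrow m d S) i j'" "j < fst (addrow m d S) i" "\<not> snd (addrow m d S) i j"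
        by blast
      show False
      proof (cases i)
        case 0 then show False using a b by (auto simp: addrow_def)
      next
        case (Suc i') then show False using a b by (auto simp: addrow_def)
      qed
    qed
  qed
  also have "\<dots> \<longleftrightarrow> colfree d j \<and> (j \<in> S \<or> (\<forall>s\<in>S. j < s))"
    using assms unfolding colfree_def by (auto simp: not_less) (metis order_le_neq_trans)
  finally show ?thesis .
qed

lemma Ufree_addrow:
  "Ufree m (addrow m d S) = {j \<in> Ufree m d. j \<in> S \<or> (\<forall>s\<in>S. j < s)}"
proof (rule set_eqI)
  fix j show "j \<in> Ufree m (addrow m d S) \<longleftrightarrow> j \<in> {j \<in> Ufree m d. j \<in> S \<or> (\<forall>s\<in>S. j < s)}"
  proof (cases "j < m")
    case True then show ?thesis by (simp add: Ufree_def colfree_addrow)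
  next
    case False then show ?thesis by (simp add: Ufree_def)
  qed
qed



fun tau :: "rat fls \<Rightarrow> nat \<Rightarrow> rat fls" where
  "tau z 0 = 1"
| "tau z (Suc u) = (1 + qvar * z) * tau z u + (z - 1) * z ^ u"

definition cnt :: "nat set \<Rightarrow> nat set \<Rightarrow> nat" where
  "cnt U S = card {j \<in> U. j \<in> S \<or> (\<forall>s\<in>S. j < s)}"

lemma cnt_empty: "cnt U {} = card U"
  by (simp add: cnt_def)

lemma cnt_insert_out:
  assumes "finite A" "\<forall>a\<in>A. a < b" "S \<subseteq> A"
  shows "cnt (insert b A) S = cnt A S + (if S = {} then 1 else 0)"
proof -
  have bA: "b \<notin> A" using assms(2) by blast
  show ?thesis
  proof (cases "S = {}")
    case True
    then show ?thesis using assms(1) bA by (simp add: cnt_empty)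
  next
    case False
    then obtain s where s: "s \<in> S" by blast
    then have "s < b" using assms(2,3) by blast
    then have "\<not> (b \<in> S \<or> (\<forall>s\<in>S. b < s))" using s assms(2,3) by (meson less_asym subsetD)
    then have "{j \<in> insert b A. j \<in> S \<or> (\<forall>s\<in>S. j < s)} = {j \<in> A. j \<in> S \<or> (\<forall>s\<in>S. j < s)}"
      by blast
    then show ?thesis using False by (simp add: cnt_def)
  qed
qed

lemma cnt_insert_in:
  assumes "finite A" "\<forall>a\<in>A. a < b" "S \<subseteq> A"
  shows "cnt (insert b A) (insert b S) = Suc (cnt A S)"
proof -
  have bA: "b \<notin> A" using assms(2) by blast
  have "{j \<in> insert b A. j \<in> insert b S \<or> (\<forall>s\<in>insert b S. j < s)}
      = insert b {j \<in> A. j \<in> S \<or> (\<forall>s\<in>S. j < s)}"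
    using assms(2) by auto
  moreover have "finite {j \<in> A. j \<in> S \<or> (\<forall>s\<in>S. j < s)}" using assms(1) by simp
  moreover have "b \<notin> {j \<in> A. j \<in> S \<or> (\<forall>s\<in>S. j < s)}" using bA by simp
  ultimately show ?thesis by (simp add: cnt_def)
qed

lemma subset_sum:
  assumes "finite U"
  shows "(\<Sum>S\<in>Pow U. qvar ^ card S * z ^ cnt U S) = tau z (card U)"
  using assms
proof (induction U rule: finite_linorder_max_induct)
  case empty
  then show ?case by (simp add: cnt_def)
next
  case (insert b A)
  have bA: "b \<notin> A" using insert.hyps(2) by blast
  have fP: "finite (Pow A)" using insert.hyps(1) by simp
  have disj: "Pow A \<inter> insert b ` Pow A = {}" using bA by blast
  have inj: "inj_on (insert b) (Pow A)"
    by (rule inj_onI) (metis PowD bA insert_ident subset_iff)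
  have "(\<Sum>S\<in>Pow (insert b A). qvar ^ card S * z ^ cnt (insert b A) S)
     = (\<Sum>S\<in>Pow A. qvar ^ card S * z ^ cnt (insert b A) S)
       + (\<Sum>S\<in>insert b ` Pow A. qvar ^ card S * z ^ cnt (insert b A) S)"
    unfolding Pow_insert using fP disj by (intro sum.union_disjoint) simp_all
  also have "(\<Sum>S\<in>insert b ` Pow A. qvar ^ card S * z ^ cnt (insert b A) S)
     = (\<Sum>S\<in>Pow A. qvar ^ card (insert b S) * z ^ cnt (insert b A) (insert b S))"
    using inj by (simp add: sum.reindex)
  also have "\<dots> = (\<Sum>S\<in>Pow A. (qvar * z) * (qvar ^ card S * z ^ cnt A S))"
  proof (rule sum.cong[OF refl])
    fix S assume S: "S \<in> Pow A"
    then have "finite S" "b \<notin> S" using insert.hyps(1) bA finite_subset by auto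
    then have "card (insert b S) = Suc (card S)" by simp
    moreover have "cnt (insert b A) (insert b S) = Suc (cnt A S)"
      using S insert.hyps by (intro cnt_insert_in) auto
    ultimately show "qvar ^ card (insert b S) * z ^ cnt (insert b A) (insert b S)
        = (qvar * z) * (qvar ^ card S * z ^ cnt A S)" by (simp add: algebra_simps)
  qed
  also have "(\<Sum>S\<in>Pow A. qvar ^ card S * z ^ cnt (insert b A) S)
     = (\<Sum>S\<in>Pow A. qvar ^ card S * z ^ cnt A S + (if S = {} then (z - 1) * z ^ card A else 0))"
  proof (rule sum.cong[OF refl])
    fix S assume S: "S \<in> Pow A"
    have c: "cnt (insert b A) S = cnt A S + (if S = {} then 1 else 0)"
      using S insert.hyps by (intro cnt_insert_out) auto
    show "qvar ^ card S * z ^ cnt (insert b A) S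
        = qvar ^ card S * z ^ cnt A S + (if S = {} then (z - 1) * z ^ card A else 0)"
    proof (cases "S = {}")
      case True then show ?thesis using c by (simp add: cnt_empty algebra_simps)
    next
      case False then show ?thesis using c by simp
    qed
  qed
  also have "\<dots> = (\<Sum>S\<in>Pow A. qvar ^ card S * z ^ cnt A S) + (z - 1) * z ^ card A"
    using fP by (simp add: sum.distrib)
  finally have "(\<Sum>S\<in>Pow (insert b A). qvar ^ card S * z ^ cnt (insert b A) S)
      = tau z (card A) + (z - 1) * z ^ card A + (qvar * z) * tau z (card A)"
    using insert.IH by (simp add: sum_distrib_left[symmetric])
  also have "\<dots> = tau z (card (insert b A))"
    using insert.hyps(1) bA by (simp add: algebra_simps)
  finally show ?case .
qed

lemma sum_Top:
  "(\<Sum>d\<in>Top (Suc k) m. qvar ^ le_rank d * z ^ unr m d)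
   = (\<Sum>d\<in>Lset k m. qvar ^ le_rank d * tau z (unr m d))"
proof -
  have fU: "finite (Ufree m d)" for d by (simp add: Ufree_def)
  have "(\<Sum>d\<in>Top (Suc k) m. qvar ^ le_rank d * z ^ unr m d)
     = (\<Sum>p\<in>(SIGMA d:Lset k m. Pow (Ufree m d)). qvar ^ le_rank (addrow m (fst p) (snd p)) * z ^ unr m (addrow m (fst p) (snd p)))"
    unfolding Top_image by (subst sum.reindex[OF Top_inj]) (simp add: case_prod_beta)
  also have "\<dots> = (\<Sum>d\<in>Lset k m. \<Sum>S\<in>Pow (Ufree m d). qvar ^ le_rank (addrow m d S) * z ^ unr m (addrow m d S))"
    using sum.Sigma[of "Lset k m" "\<lambda>d. Pow (Ufree m d)" "\<lambda>d S. qvar ^ le_rank (addrow m d S) * z ^ unr m (addrow m d S)"]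
      L_finite fU by (simp add: case_prod_beta)
  also have "\<dots> = (\<Sum>d\<in>Lset k m. qvar ^ le_rank d * tau z (unr m d))"
  proof (rule sum.cong[OF refl])
    fix d assume d: "d \<in> Lset k m"
    have "(\<Sum>S\<in>Pow (Ufree m d). qvar ^ le_rank (addrow m d S) * z ^ unr m (addrow m d S))
        = (\<Sum>S\<in>Pow (Ufree m d). qvar ^ le_rank d * (qvar ^ card S * z ^ cnt (Ufree m d) S))"
    proof (rule sum.cong[OF refl])
      fix S assume S: "S \<in> Pow (Ufree m d)"
      then have "finite S" using fU finite_subset by blast
      then have "le_rank (addrow m d S) = le_rank d + card S" using d by (intro rank_addrow)
      moreover have "unr m (addrow m d S) = cnt (Ufree m d) S"
        by (simp add: unr_def cnt_def Ufree_addrow)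
      ultimately show "qvar ^ le_rank (addrow m d S) * z ^ unr m (addrow m d S)
        = qvar ^ le_rank d * (qvar ^ card S * z ^ cnt (Ufree m d) S)" by (simp add: power_add)
    qed
    also have "\<dots> = qvar ^ le_rank d * tau z (unr m d)"
      by (simp add: sum_distrib_left[symmetric] subset_sum fU unr_def)
    finally show "(\<Sum>S\<in>Pow (Ufree m d). qvar ^ le_rank (addrow m d S) * z ^ unr m (addrow m d S))
        = qvar ^ le_rank d * tau z (unr m d)" .
  qed
  finally show ?thesis .
qed

definition Bz :: "rat fls \<Rightarrow> nat \<Rightarrow> nat \<Rightarrow> rat fls" where
  "Bz z k m = (\<Sum>d\<in>Lset k m. qvar ^ le_rank d * z ^ unr m d)"

lemma Bz_0: "Bz z 0 m = z ^ m"
proof -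
  have "Ufree m (\<lambda>_. 0, \<lambda>_ _. False) = {..<m}" by (auto simp: Ufree_def colfree_def)
  moreover have "le_rank (\<lambda>_. 0, \<lambda>_ _. False) = 0" by (simp add: le_rank_def)
  ultimately show ?thesis by (simp add: Bz_def L0 unr_def)
qed

lemma Bz_Suc_0: "Bz z (Suc k) 0 = (\<Sum>d\<in>Lset k 0. qvar ^ le_rank d * tau z (unr 0 d))"
  unfolding Bz_def L_zero[of "Suc k"] by (rule sum_Top)

lemma Bz_Suc_Suc: "Bz z (Suc k) (Suc m) = z * Bz z (Suc k) m + (\<Sum>d\<in>Lset k (Suc m). qvar ^ le_rank d * tau z (unr (Suc m) d))"
proof -
  have fT: "finite (Top (Suc k) (Suc m))" using L_finite[of "Suc k" "Suc m"] by (simp add: L_Suc)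
  have "Bz z (Suc k) (Suc m) = (\<Sum>d\<in>Lset (Suc k) m. qvar ^ le_rank d * z ^ unr (Suc m) d)
      + (\<Sum>d\<in>Top (Suc k) (Suc m). qvar ^ le_rank d * z ^ unr (Suc m) d)"
    unfolding Bz_def L_Suc using L_Suc_disj fT L_finite by (intro sum.union_disjoint) auto
  also have "(\<Sum>d\<in>Lset (Suc k) m. qvar ^ le_rank d * z ^ unr (Suc m) d) = z * Bz z (Suc k) m"
    unfolding Bz_def sum_distrib_left
  proof (rule sum.cong[OF refl])
    fix d assume d: "d \<in> Lset (Suc k) m"
    have "m \<notin> Ufree m d" by (simp add: Ufree_def)
    then have "unr (Suc m) d = Suc (unr m d)"
      using Ufree_Suc[OF d] by (simp add: unr_def Ufree_def)
    then show "qvar ^ le_rank d * z ^ unr (Suc m) d = z * (qvar ^ le_rank d * z ^ unr m d)" by simp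
  qed
  finally show ?thesis by (simp add: sum_Top)
qed



lemma qint_0 [simp]: "qint 0 = 0" by (simp add: qint_def)
lemma qint_Suc: "qint (Suc j) = qint j + qvar ^ j" by (simp add: qint_def)
lemma qint_Suc': "qint (Suc j) = 1 + qvar * qint j"
  unfolding qint_def by (subst sum.lessThan_Suc_shift) (simp add: sum_distrib_left)
lemma qint_1 [simp]: "qint (Suc 0) = 1" by (simp add: qint_def)

lemma tau_eval:
  "qvar ^ j * tau (qint (Suc j)) u
     = qint (Suc j) * qint (Suc (Suc j)) ^ u - qint j * qint (Suc j) ^ u"
proof (induction u)
  case 0 then show ?case by (simp add: qint_Suc)
next
  case (Suc u)
  define a where "a = qint j"
  define p where "p = (qvar :: rat fls) ^ j"
  define z where "z = qint (Suc j)"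
  define w where "w = qint (Suc (Suc j))"
  have hz1: "z - 1 = qvar * a" by (simp add: z_def a_def qint_Suc')
  have hw: "w = z + qvar * p" by (simp add: w_def z_def p_def qint_Suc[of "Suc j"])
  have h1qz: "1 + qvar * z = w" by (simp add: w_def z_def qint_Suc'[of "Suc j"])
  have IH: "p * tau z u = z * w ^ u - a * z ^ u" using Suc.IH by (simp add: p_def z_def w_def a_def)
  have "p * tau z (Suc u) = (1 + qvar * z) * (p * tau z u) + p * (z - 1) * z ^ u"
    by (simp add: algebra_simps)
  also have "\<dots> = w * (z * w ^ u - a * z ^ u) + p * (qvar * a) * z ^ u"
    by (simp only: IH h1qz hz1)
  also have "\<dots> = z * w ^ Suc u - a * z ^ u * (w - qvar * p)"
    by (simp add: algebra_simps)
  also have "\<dots> = z * w ^ Suc u - a * z ^ Suc u"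
    by (simp add: hw)
  finally show ?case by (simp add: p_def z_def w_def a_def)
qed

definition bb :: "nat \<Rightarrow> nat \<Rightarrow> nat \<Rightarrow> rat fls" where
  "bb j k m = Bz (qint (Suc j)) k m"

lemma bb_0: "bb j 0 m = qint (Suc j) ^ m"
  by (simp add: bb_def Bz_0)

lemma top_eval:
  "qvar ^ j * (\<Sum>d\<in>Lset k m. qvar ^ le_rank d * tau (qint (Suc j)) (unr m d))
     = qint (Suc j) * bb (Suc j) k m - qint j * bb j k m"
proof -
  have "qvar ^ j * (\<Sum>d\<in>Lset k m. qvar ^ le_rank d * tau (qint (Suc j)) (unr m d))
      = (\<Sum>d\<in>Lset k m. qint (Suc j) * (qvar ^ le_rank d * qint (Suc (Suc j)) ^ unr m d)
            - qint j * (qvar ^ le_rank d * qint (Suc j) ^ unr m d))"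
    unfolding sum_distrib_left
  proof (rule sum.cong[OF refl])
    fix d
    have "qvar ^ j * (qvar ^ le_rank d * tau (qint (Suc j)) (unr m d))
        = qvar ^ le_rank d * (qvar ^ j * tau (qint (Suc j)) (unr m d))" by (simp add: algebra_simps)
    also have "\<dots> = qint (Suc j) * (qvar ^ le_rank d * qint (Suc (Suc j)) ^ unr m d)
            - qint j * (qvar ^ le_rank d * qint (Suc j) ^ unr m d)"
      by (simp add: tau_eval algebra_simps)
    finally show "qvar ^ j * (qvar ^ le_rank d * tau (qint (Suc j)) (unr m d))
        = qint (Suc j) * (qvar ^ le_rank d * qint (Suc (Suc j)) ^ unr m d)
            - qint j * (qvar ^ le_rank d * qint (Suc j) ^ unr m d)" .
  qed
  also have "\<dots> = qint (Suc j) * bb (Suc j) k m - qint j * bb j k m"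
    by (simp add: sum_subtractf sum_distrib_left bb_def Bz_def)
  finally show ?thesis .
qed

lemma bb_Suc_0: "qvar ^ j * bb j (Suc k) 0 = qint (Suc j) * bb (Suc j) k 0 - qint j * bb j k 0"
  by (simp add: bb_def[of j "Suc k"] Bz_Suc_0 top_eval[symmetric])

lemma bb_Suc_Suc: "qvar ^ j * bb j (Suc k) (Suc m) = qvar ^ j * qint (Suc j) * bb j (Suc k) m
    + (qint (Suc j) * bb (Suc j) k (Suc m) - qint j * bb j k (Suc m))"
  by (simp add: bb_def[of j "Suc k"] Bz_Suc_Suc top_eval[symmetric] algebra_simps)

definition G :: "nat \<Rightarrow> ser" where
  "G j = Abs_fps (\<lambda>k. Abs_fps (\<lambda>n. if k \<le> n then bb j k (n - k) else 0))"

lemma G_nth: "G j $ k $ n = (if k \<le> n then bb j k (n - k) else 0)"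
  by (simp add: G_def)

lemma cst_mult_nth: "(cst c * F) $ k = fps_const c * F $ k"
  by (simp add: cst_def)

lemma xvar_mult_nth: "(xvar * F) $ k = fps_X * F $ k"
  by (simp add: xvar_def)

lemma yvar_mult_nth: "(yvar * F) $ k = (if k = 0 then 0 else F $ (k - 1))"
  by (simp add: yvar_def)

lemma cst_nth: "cst c $ k = (if k = 0 then fps_const c else 0)"
  by (simp add: cst_def)

lemmas coef_simps = cst_mult_nth xvar_mult_nth yvar_mult_nth cst_nth

lemma factor_G: "factor j * G j = cst (qvar ^ j) + cst (qint (Suc j)) * (xvar * (yvar * G (Suc j)))"
proof -
  have e: "factor j * G j = cst (qvar ^ j) * G j - cst (qvar ^ j * qint (j + 1)) * (xvar * G j)
      + cst (qint j) * (xvar * (yvar * G j))"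
    by (simp add: factor_def algebra_simps)
  show ?thesis unfolding e
  proof (rule fps_ext, rule fps_ext)
    fix k n
    show "(cst (qvar ^ j) * G j - cst (qvar ^ j * qint (j + 1)) * (xvar * G j)
      + cst (qint j) * (xvar * (yvar * G j))) $ k $ n =
      (cst (qvar ^ j) + cst (qint (Suc j)) * (xvar * (yvar * G (Suc j)))) $ k $ n"
    proof (cases k)
      case 0
      then show ?thesis
        by (cases n) (simp_all add: coef_simps G_nth bb_0 del: fps_mult_nth_0)
    next
      case (Suc k')
      show ?thesis
      proof (cases n)
        case 0 then show ?thesis
          using Suc by (simp add: coef_simps G_nth del: fps_mult_nth_0)
      next
        case (Suc n')
        show ?thesis
        proof (cases "k' \<le> n'")
          case False
          then show ?thesis using \<open>k = Suc k'\<close> Suc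
            by (simp add: coef_simps G_nth del: fps_mult_nth_0)
        next
          case True
          define m where "m = n' - k'"
          show ?thesis
          proof (cases m)
            case 0
            then have "n' = k'" using True m_def by simp
            then show ?thesis using \<open>k = Suc k'\<close> Suc bb_Suc_0[of j k']
              by (simp add: coef_simps G_nth del: fps_mult_nth_0)
          next
            case (Suc m')
            then have "n' - Suc k' = m'" "Suc k' \<le> n'" "n' - k' = Suc m'" using True m_def by auto
            then show ?thesis using \<open>k = Suc k'\<close> \<open>n = Suc n'\<close> bb_Suc_Suc[of j k' m']
              by (simp add: coef_simps G_nth del: fps_mult_nth_0)
          qed
        qed
      qed
    qed
  qed
qed



lemma factor_nth0: "factor j $ 0 = fps_const (qvar ^ j) - fps_const (qvar ^ j * qint (j + 1)) * fps_X"
  by (simp add: factor_def cst_def xvar_def yvar_def)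

lemma factor_inv: "factor j * inverse (factor j) = 1"
proof -
  let ?f0 = "factor j $ 0"
  have "?f0 $ 0 = qvar ^ j" by (simp add: factor_nth0)
  then have "?f0 $ 0 \<noteq> 0" by simp
  then have "?f0 * inverse ?f0 = 1" by (rule inverse_mult_eq_1')
  then have "factor j * fps_right_inverse (factor j) (inverse ?f0) = 1" by (rule fps_right_inverse)
  then show ?thesis by (simp add: fps_inverse_def)
qed

lemma G_eq: "G j = inverse (factor j) * (cst (qvar ^ j) + cst (qint (Suc j)) * (xvar * (yvar * G (Suc j))))"
proof -
  have "G j = (inverse (factor j) * factor j) * G j" using factor_inv by (simp add: mult.commute)
  also have "\<dots> = inverse (factor j) * (factor j * G j)" by (simp add: mult.assoc)
  finally show ?thesis by (simp add: factor_G)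
qed

lemma cst_mult: "cst (a * b) = cst a * cst b" by (simp add: cst_def)
lemma cst_1: "cst 1 = 1" by (simp add: cst_def)

lemma qfact_0: "qfact 0 = 1" by (simp add: qfact_def)
lemma qfact_Suc: "qfact (Suc n) = qfact n * qint (Suc n)"
  by (simp add: qfact_def)

lemma tele: "G 0 = (\<Sum>i<N. term_i i) + cst (qfact N) * xvar ^ N * yvar ^ N * (\<Prod>j<N. inverse (factor j)) * G N"
proof (induction N)
  case 0 then show ?case by (simp add: qfact_0 cst_1)
next
  case (Suc N)
  let ?P = "\<Prod>j<N. inverse (factor j)"
  let ?C = "cst (qfact N) * xvar ^ N * yvar ^ N * ?P"
  have t: "term_i N = cst (qvar ^ N) * cst (qfact N) * xvar ^ N * yvar ^ N * (?P * inverse (factor N))"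
    unfolding term_i_def cst_mult
    by (simp add: atLeast0AtMost lessThan_Suc_atMost[symmetric])
  have "?C * G N = ?C * inverse (factor N) * cst (qvar ^ N)
      + ?C * inverse (factor N) * cst (qint (Suc N)) * xvar * yvar * G (Suc N)"
    by (subst G_eq) (simp add: algebra_simps)
  also have "\<dots> = term_i N + cst (qfact (Suc N)) * xvar ^ Suc N * yvar ^ Suc N
        * (\<Prod>j<Suc N. inverse (factor j)) * G (Suc N)"
    unfolding t qfact_Suc cst_mult by (simp add: algebra_simps)
  finally show ?case using Suc.IH by (simp add: algebra_simps)
qed

lemma lim_lemma:
  fixes S :: "nat \<Rightarrow> ser"
  assumes "\<And>N. S N - L = yvar ^ N * h N"
  shows "S \<longlonglongrightarrow> L"
proof (rule metric_LIMSEQ_I)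
  fix r :: real assume r: "0 < r"
  obtain N0 where N0: "(1/2::real) ^ N0 < r" using real_arch_pow_inv[OF r, of "1/2"] by auto
  have "\<forall>n\<ge>N0. dist (S n) L < r"
  proof (intro allI impI)
    fix n assume n: "N0 \<le> n"
    show "dist (S n) L < r"
    proof (cases "S n = L")
      case True then show ?thesis using r by simp
    next
      case False
      then have nz: "S n - L \<noteq> 0" by simp
      have "n \<le> subdegree (S n - L)"
      proof (rule subdegree_geI[OF nz])
        fix i assume "i < n"
        then show "(S n - L) $ i = 0" unfolding assms yvar_def by (simp add: fps_X_power_mult_nth)
      qed
      then have "inverse (2 ^ subdegree (S n - L)) \<le> (inverse (2 ^ n) :: real)"
        by (intro le_imp_inverse_le) (simp_all add: power_increasing)
      also have "(inverse (2 ^ n) :: real) \<le> (1/2) ^ N0"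
      proof -
        have "(1/2::real) ^ n \<le> (1/2) ^ N0" by (rule power_decreasing) (use n in auto)
        then show ?thesis by (simp add: power_one_over inverse_eq_divide)
      qed
      finally show ?thesis using N0 False by (simp add: dist_fps_def)
    qed
  qed
  then show "\<exists>no. \<forall>n\<ge>no. dist (S n) L < r" by blast
qed

lemma E_inv: "inverse (factor 0) = fps_const (Abs_fps (\<lambda>_. 1 :: rat fls))"
proof -
  let ?E = "fps_const (Abs_fps (\<lambda>_. 1 :: rat fls)) :: ser"
  have g: "(1 - fps_X) * Abs_fps (\<lambda>_. 1 :: rat fls) = 1"
    using inverse_mult_eq_1[of "Abs_fps (\<lambda>_. 1 :: rat fls)"] by (simp add: fps_inverse_gp')
  have f0: "factor 0 = 1 - fps_const fps_X"
    by (simp add: factor_def cst_def xvar_def fps_const_1_eq_1[symmetric] del: fps_const_1_eq_1)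
  have "factor 0 * ?E = fps_const ((1 - fps_X) * Abs_fps (\<lambda>_. 1 :: rat fls))"
    unfolding f0 by (simp add: algebra_simps fps_const_1_eq_1[symmetric] fps_const_mult fps_const_sub del: fps_const_1_eq_1)
  then have fe: "factor 0 * ?E = 1" using g by simp
  have "inverse (factor 0) = inverse (factor 0) * (factor 0 * ?E)" using fe by simp
  also have "\<dots> = (factor 0 * inverse (factor 0)) * ?E" by (simp add: algebra_simps)
  finally show ?thesis using factor_inv by simp
qed

lemma term0: "term_i 0 = inverse (factor 0)"
  by (simp add: term_i_def qfact_0 cst_1)

lemma G0_eq: "G 0 = A_gf + inverse (factor 0)"
  unfolding E_inv
proof (rule fps_ext, rule fps_ext)
  fix k n
  show "G 0 $ k $ n = (A_gf + fps_const (Abs_fps (\<lambda>_. 1))) $ k $ n"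
  proof (cases k)
    case 0 then show ?thesis by (simp add: G_nth bb_0 A_gf_def)
  next
    case (Suc k')
    have "bb 0 k (n - k) = A_kn k n" if "k \<le> n"
      using that by (simp add: bb_def Bz_def A_kn_def Lset_def)
    then show ?thesis using Suc by (simp add: G_nth A_gf_def A_kn_def)
  qed
qed

theorem mainTheorem5:
  shows "(\<lambda>i. term_i (Suc i)) sums A_gf"
  unfolding sums_def
proof (rule lim_lemma)
  fix N
  let ?R = "cst (qfact (Suc N)) * xvar ^ Suc N * yvar ^ Suc N * (\<Prod>j<Suc N. inverse (factor j)) * G (Suc N)"
  have "(\<Sum>i<N. term_i (Suc i)) = (\<Sum>i<Suc N. term_i i) - term_i 0"
    by (subst sum.lessThan_Suc_shift) simp
  also have "\<dots> = G 0 - ?R - term_i 0" using tele[of "Suc N"] by (simp add: algebra_simps)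
  also have "\<dots> = A_gf - ?R" by (simp add: G0_eq term0)
  finally have "(\<Sum>i<N. term_i (Suc i)) - A_gf
      = yvar ^ N * (- (cst (qfact (Suc N)) * xvar ^ Suc N * yvar * (\<Prod>j<Suc N. inverse (factor j)) * G (Suc N)))"
    by (simp add: algebra_simps)
  then show "(\<Sum>i<N. term_i (Suc i)) - A_gf = yvar ^ N * (- (cst (qfact (Suc N)) * xvar ^ Suc N * yvar * (\<Prod>j<Suc N. inverse (factor j)) * G (Suc N)))" .
qed

end
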